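(* Let $I,J$ be finite sets, $\omega:\mathbb{R}^I\to\mathbb{R}^I$ a nonsingular linear map, $\Lambda:\mathbb{R}^J\to\mathbb{R}^I$ a linear injection, $\iota:\mathbb{R}^J\to\mathbb{R}^J$ a linear bijection and $\vartheta:\mathbb{R}^J\to\mathbb{R}^J$ a symmetric positive definite linear map. On $\mathbb{R}^J\oplus\mathbb{R}^I\oplus\mathbb{R}^I$ define $$A=\begin{pmatrix}-\tfrac12\iota\iota^* & -\Lambda^* & 0\\ \Lambda & 0 & -\omega^*\\ 0 & \omega & 0\end{pmatrix},\qquad B=\begin{pmatrix}\iota\\0\\0\end{pmatrix}\vartheta^{1/2}.$$ If the pair $(\omega^*\omega,\Lambda)$ satisfies the Kalman condition, then the pair $(A,B)$ satisfies the Kalman condition.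
   Context: A pair $(M,N)$ of linear maps $M:\mathbb{R}^m\to\mathbb{R}^m$, $N:\mathbb{R}^k\to\mathbb{R}^m$ satisfies the Kalman condition if the ranges of $N, MN, M^2N, \dots$ together span $\mathbb{R}^m$. Stars denote transposes (adjoints for the standard inner products). *)

theory Defs
  imports "HOL-Analysis.Analysis"
begin

text \<open>Kalman condition for a pair (M,N), M an m x m matrix, N an m x k matrix
  (acting on column vectors via *v): the ranges of N, MN, M^2 N, ... span the whole space.\<close>
definition kalman :: "real^'m^'m \<Rightarrow> real^'k^'m \<Rightarrow> bool" where
  "kalman M N \<longleftrightarrow>
     span (\<Union>k. range ((((*v) M) ^^ k) \<circ> ((*v) N))) = UNIV"

text \<open>Symmetric positive definite matrices.\<close>
definition sym_posdef :: "real^'n^'n \<Rightarrow> bool" where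
  "sym_posdef T \<longleftrightarrow> transpose T = T \<and> (\<forall>x. x \<noteq> 0 \<longrightarrow> x \<bullet> (T *v x) > 0)"

text \<open>The block operator A on R^J (+) R^I (+) R^I, with index type ('j + 'i) + 'i:
  Inl (Inl _) = first R^J block, Inl (Inr _) = first R^I block, Inr _ = second R^I block.\<close>
definition blockA :: "real^'i^'i \<Rightarrow> real^'j^'i \<Rightarrow> real^'j^'j \<Rightarrow> real^(('j + 'i) + 'i)^(('j + 'i) + 'i)" where
  "blockA \<omega> \<Lambda> \<iota> = (\<chi> r c.
     (case r of
        Inl (Inl a) \<Rightarrow> (case c of
            Inl (Inl b) \<Rightarrow> - (1/2) * ((\<iota> ** transpose \<iota>) $ a $ b)
          | Inl (Inr b) \<Rightarrow> - (transpose \<Lambda> $ a $ b)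
          | Inr b \<Rightarrow> 0)
      | Inl (Inr a) \<Rightarrow> (case c of
            Inl (Inl b) \<Rightarrow> \<Lambda> $ a $ b
          | Inl (Inr b) \<Rightarrow> 0
          | Inr b \<Rightarrow> - (transpose \<omega> $ a $ b))
      | Inr a \<Rightarrow> (case c of
            Inl (Inl b) \<Rightarrow> 0
          | Inl (Inr b) \<Rightarrow> \<omega> $ a $ b
          | Inr b \<Rightarrow> 0)))"

text \<open>The block operator B = (iota; 0; 0) S, where S is the square root of theta.\<close>
definition blockB :: "real^'j^'j \<Rightarrow> real^'j^'j \<Rightarrow> real^'j^(('j::finite + 'i::finite) + 'i)" where
  "blockB \<iota> S = (\<chi> r c. (case r of Inl (Inl a) \<Rightarrow> (\<iota> ** S) $ a $ c | _ \<Rightarrow> 0))"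

end

theory Submission
  imports Defs
begin

definition e1 :: "real^'j \<Rightarrow> real^(('j::finite+'i::finite)+'i)" where
  "e1 x = (\<chi> r. case r of Inl (Inl a) \<Rightarrow> x$a | _ \<Rightarrow> 0)"
definition e2 :: "real^'i \<Rightarrow> real^(('j::finite+'i::finite)+'i)" where
  "e2 x = (\<chi> r. case r of Inl (Inr a) \<Rightarrow> x$a | _ \<Rightarrow> 0)"
definition e3 :: "real^'i \<Rightarrow> real^(('j::finite+'i::finite)+'i)" where
  "e3 x = (\<chi> r. case r of Inr a \<Rightarrow> x$a | _ \<Rightarrow> 0)"

lemma sum_UNIV_3:
  "(\<Sum>c\<in>(UNIV::(('j::finite+'i::finite)+'i) set). f c) =
   (\<Sum>a\<in>UNIV. f (Inl (Inl a))) + (\<Sum>b\<in>UNIV. f (Inl (Inr b))) + (\<Sum>b\<in>UNIV. f (Inr b))"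
  by (simp add: sum.Plus comp_def flip: UNIV_Plus_UNIV)

lemma A_e1: "blockA \<omega> \<Lambda> \<iota> *v (e1 x :: real^(('j::finite+'i::finite)+'i))
   = e1 (- ((1/2) *\<^sub>R ((\<iota> ** transpose \<iota>) *v x))) + e2 (\<Lambda> *v x)"
  unfolding vec_eq_iff
proof
  fix r :: "('j+'i)+'i"
  show "(blockA \<omega> \<Lambda> \<iota> *v (e1 x :: real^(('j::finite+'i::finite)+'i))) $ r =
    (e1 (- ((1/2) *\<^sub>R ((\<iota> ** transpose \<iota>) *v x))) + e2 (\<Lambda> *v x)) $ r"
    by (auto split: sum.split simp add: matrix_vector_mult_def blockA_def e1_def e2_def sum_UNIV_3 sum_distrib_left sum_negf)
qed

lemma A_e2: "blockA \<omega> \<Lambda> \<iota> *v (e2 x :: real^(('j::finite+'i::finite)+'i))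
   = e1 (- (transpose \<Lambda> *v x)) + e3 (\<omega> *v x)"
  unfolding vec_eq_iff
proof
  fix r :: "('j+'i)+'i"
  show "(blockA \<omega> \<Lambda> \<iota> *v (e2 x :: real^(('j::finite+'i::finite)+'i))) $ r =
    (e1 (- (transpose \<Lambda> *v x)) + e3 (\<omega> *v x)) $ r"
    by (auto split: sum.split simp add: matrix_vector_mult_def blockA_def e1_def e2_def e3_def sum_UNIV_3 sum_distrib_left sum_negf)
qed

lemma A_e3: "blockA \<omega> \<Lambda> \<iota> *v (e3 x :: real^(('j::finite+'i::finite)+'i))
   = e2 (- (transpose \<omega> *v x))"
  unfolding vec_eq_iff
proof
  fix r :: "('j+'i)+'i"
  show "(blockA \<omega> \<Lambda> \<iota> *v (e3 x :: real^(('j::finite+'i::finite)+'i))) $ r =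
    (e2 (- (transpose \<omega> *v x))) $ r"
    by (auto split: sum.split simp add: matrix_vector_mult_def blockA_def e1_def e2_def e3_def sum_UNIV_3 sum_distrib_left sum_negf)
qed

lemma B_e1: "blockB \<iota> S *v x = (e1 ((\<iota> ** S) *v x) :: real^(('j::finite+'i::finite)+'i))"
  unfolding vec_eq_iff
proof
  fix r :: "('j+'i)+'i"
  show "(blockB \<iota> S *v x) $ r = (e1 ((\<iota> ** S) *v x) :: real^(('j::finite+'i::finite)+'i)) $ r"
    by (auto split: sum.split simp add: matrix_vector_mult_def blockB_def e1_def)
qed

lemma decomp: "(v :: real^(('j::finite+'i::finite)+'i)) =
   e1 (\<chi> a. v $ Inl (Inl a)) + e2 (\<chi> a. v $ Inl (Inr a)) + e3 (\<chi> a. v $ Inr a)"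
  unfolding vec_eq_iff
proof
  fix r :: "('j+'i)+'i"
  show "v $ r = (e1 (\<chi> a. v $ Inl (Inl a)) + e2 (\<chi> a. v $ Inl (Inr a)) + e3 (\<chi> a. v $ Inr a)) $ r"
    by (auto split: sum.split simp add: e1_def e2_def e3_def)
qed

lemma linear_e1: "linear (e1 :: real^'j \<Rightarrow> real^(('j::finite+'i::finite)+'i))"
  by (rule linearI) (auto simp: vec_eq_iff e1_def split: sum.split)
lemma linear_e2: "linear (e2 :: real^'i \<Rightarrow> real^(('j::finite+'i::finite)+'i))"
  by (rule linearI) (auto simp: vec_eq_iff e2_def split: sum.split)
lemma linear_e3: "linear (e3 :: real^'i \<Rightarrow> real^(('j::finite+'i::finite)+'i))"
  by (rule linearI) (auto simp: vec_eq_iff e3_def split: sum.split)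


lemma kalman_A_closed:
  fixes A :: "real^'m^'m" and B :: "real^'k^'m"
  assumes "y \<in> span (\<Union>k. range ((((*v) A) ^^ k) \<circ> ((*v) B)))"
  shows "A *v y \<in> span (\<Union>k. range ((((*v) A) ^^ k) \<circ> ((*v) B)))"
proof -
  let ?G = "\<Union>k. range ((((*v) A) ^^ k) \<circ> ((*v) B))"
  have G: "(*v) A ` ?G \<subseteq> ?G"
  proof
    fix z assume "z \<in> (*v) A ` ?G"
    then obtain k x where "z = A *v ((((*v) A) ^^ k) (B *v x))" by auto
    then have "z = ((((*v) A) ^^ Suc k) \<circ> ((*v) B)) x" by simp
    then show "z \<in> ?G" by blast
  qed
  have "A *v y \<in> (*v) A ` span ?G" using assms by blast
  also have "\<dots> = span ((*v) A ` ?G)" by (simp add: span_linear_image)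
  also have "\<dots> \<subseteq> span ?G" using G by (rule span_mono)
  finally show ?thesis .
qed

lemma kalman_B_in:
  fixes A :: "real^'m^'m" and B :: "real^'k^'m"
  shows "B *v x \<in> span (\<Union>k. range ((((*v) A) ^^ k) \<circ> ((*v) B)))"
proof -
  have "B *v x = ((((*v) A) ^^ 0) \<circ> ((*v) B)) x" by simp
  then have "B *v x \<in> (\<Union>k. range ((((*v) A) ^^ k) \<circ> ((*v) B)))" by blast
  then show ?thesis by (rule span_base)
qed

theorem mainTheorem10:
  fixes \<omega> :: "real^'i^'i" and \<Lambda> :: "real^'j^'i" and \<iota> \<theta> S :: "real^'j^'j"
  assumes "invertible \<omega>"
    and "inj ((*v) \<Lambda>)"
    and "invertible \<iota>"
    and "sym_posdef \<theta>"
    and "sym_posdef S" and "S ** S = \<theta>"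
    and "kalman (transpose \<omega> ** \<omega>) \<Lambda>"
  shows "kalman (blockA \<omega> \<Lambda> \<iota> :: real^(('j + 'i) + 'i)^(('j + 'i) + 'i)) (blockB \<iota> S)"
proof -
  define A where "A = (blockA \<omega> \<Lambda> \<iota> :: real^(('j + 'i) + 'i)^(('j + 'i) + 'i))"
  define B where "B = (blockB \<iota> S :: real^'j^(('j + 'i) + 'i))"
  define R where "R = span (\<Union>k. range ((((*v) A) ^^ k) \<circ> ((*v) B)))"
  have AR: "\<And>y. y \<in> R \<Longrightarrow> A *v y \<in> R" and BR: "\<And>x. B *v x \<in> R"
    unfolding R_def by (rule kalman_A_closed, assumption) (rule kalman_B_in)
  have subR: "subspace R" unfolding R_def by simp
  have injS: "inj ((*v) S)"
  proof (rule injI)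
    fix x y assume "S *v x = S *v y"
    then have "S *v (x - y) = 0" by (simp add: matrix_vector_mult_diff_distrib)
    then have "(x - y) \<bullet> (S *v (x - y)) = 0" by simp
    moreover have "x - y \<noteq> 0 \<Longrightarrow> 0 < (x - y) \<bullet> (S *v (x - y))"
      using assms(5) unfolding sym_posdef_def by blast
    ultimately show "x = y" by fastforce
  qed
  obtain Wi where Wi: "Wi ** \<iota> = mat 1" using assms(3) unfolding invertible_def by blast
  have inji: "inj ((*v) \<iota>)"
  proof (rule injI)
    fix x y assume "\<iota> *v x = \<iota> *v y"
    then have "Wi *v (\<iota> *v x) = Wi *v (\<iota> *v y)" by simp
    then show "x = y" by (simp only: matrix_vector_mul_assoc Wi matrix_vector_mul_lid)
  qed
  have cmp: "(*v) (\<iota> ** S) = (*v) \<iota> \<circ> (*v) S"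
    by (rule ext) (simp only: comp_def matrix_vector_mul_assoc)
  have injiS: "inj ((*v) (\<iota> ** S))"
    unfolding cmp using injS inji by (rule inj_compose[rotated])
  have surjiS: "surj ((*v) (\<iota> ** S))"
    by (simp add: linear_injective_imp_surjective injiS)
  have E1: "e1 x \<in> R" for x
  proof -
    obtain z where "x = (\<iota> ** S) *v z" using surjiS by (metis surjD)
    then show ?thesis using BR[of z] unfolding B_def by (simp add: B_e1)
  qed
  have E2E3: "e3 (\<omega> *v y) \<in> R" if "e2 y \<in> R" for y
  proof -
    have "e1 (- (transpose \<Lambda> *v y)) + e3 (\<omega> *v y) \<in> R"
      using AR[OF that] unfolding A_def by (simp add: A_e2)
    then have "e1 (- (transpose \<Lambda> *v y)) + e3 (\<omega> *v y) - e1 (- (transpose \<Lambda> *v y)) \<in> R"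
      using E1 subR subspace_diff by blast
    then show ?thesis by simp
  qed
  define V where "V = {y. e2 y \<in> R}"
  have subV: "subspace V"
    unfolding V_def subspace_def using subR
    by (simp add: linear_0[OF linear_e2] linear_add[OF linear_e2] linear_scale[OF linear_e2]
        subspace_0 subspace_add subspace_scale)
  have Mstep: "(transpose \<omega> ** \<omega>) *v y \<in> V" if "y \<in> V" for y
  proof -
    have "e3 (\<omega> *v y) \<in> R" using E2E3 that unfolding V_def by simp
    then have "e2 (- (transpose \<omega> *v (\<omega> *v y))) \<in> R"
      using AR[of "e3 (\<omega> *v y)"] unfolding A_def by (simp only: A_e3)
    then have "- e2 (- (transpose \<omega> *v (\<omega> *v y))) \<in> R"
      using subR subspace_neg by blast
    then show ?thesis unfolding V_def
      by (simp add: matrix_vector_mul_assoc linear_neg[OF linear_e2, symmetric])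
  qed
  have Lam: "\<Lambda> *v x \<in> V" for x
  proof -
    have "e1 (- ((1/2) *\<^sub>R ((\<iota> ** transpose \<iota>) *v x))) + e2 (\<Lambda> *v x) \<in> R"
      using AR[OF E1[of x]] unfolding A_def by (simp add: A_e1)
    then have "e1 (- ((1/2) *\<^sub>R ((\<iota> ** transpose \<iota>) *v x))) + e2 (\<Lambda> *v x)
       - e1 (- ((1/2) *\<^sub>R ((\<iota> ** transpose \<iota>) *v x))) \<in> R"
      using E1 subR subspace_diff by blast
    then show ?thesis unfolding V_def by simp
  qed
  have gen: "((((*v) (transpose \<omega> ** \<omega>)) ^^ k) \<circ> ((*v) \<Lambda>)) x \<in> V" for k x
    by (induction k) (simp_all add: Lam Mstep)
  have "V = UNIV"
  proof -
    have "(\<Union>k. range ((((*v) (transpose \<omega> ** \<omega>)) ^^ k) \<circ> ((*v) \<Lambda>))) \<subseteq> V"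
      using gen by blast
    then have "span (\<Union>k. range ((((*v) (transpose \<omega> ** \<omega>)) ^^ k) \<circ> ((*v) \<Lambda>))) \<subseteq> V"
      using subV by (simp add: span_minimal)
    then show ?thesis using assms(7) unfolding kalman_def by blast
  qed
  then have E2: "e2 y \<in> R" for y unfolding V_def by blast
  obtain W where W: "\<omega> ** W = mat 1" using assms(1) unfolding invertible_def by blast
  have E3: "e3 z \<in> R" for z
  proof -
    have "z = \<omega> *v (W *v z)" by (simp add: matrix_vector_mul_assoc W)
    then show ?thesis using E2E3[OF E2[of "W *v z"]] by simp
  qed
  have "R = UNIV"
  proof -
    have "v \<in> R" for v
    proof -
      have "e1 (\<chi> a. v $ Inl (Inl a)) + e2 (\<chi> a. v $ Inl (Inr a)) \<in> R"
        by (rule subspace_add[OF subR E1 E2])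
      then have "e1 (\<chi> a. v $ Inl (Inl a)) + e2 (\<chi> a. v $ Inl (Inr a)) + e3 (\<chi> a. v $ Inr a) \<in> R"
        by (rule subspace_add[OF subR _ E3])
      then show ?thesis using decomp[of v] by simp
    qed
    then show ?thesis by blast
  qed
  then show ?thesis unfolding kalman_def R_def A_def B_def .
qed

end
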